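(* Let $G=(V,E)$ be a simple undirected graph on $n$ nodes, let $0<\epsilon<\frac13$, $\delta>0$, $p\in(0,1)$, and let $D\subseteq V$ be an $\epsilon^3$-near clique with $|D|\ge\delta n$; let $C=K_{\epsilon^2}(D)\cap D$. Let $S^{(1)}$ be a random subset of $V$ containing each node independently with probability $p/2$, and let $X^*=S^{(1)}\cap C$. Call $X^*$ representative if (1) $|K_{\epsilon^2}(D)\setminus K_{2\epsilon^2}(X^* )|<\epsilon|C|$ and (2) $|K_{2\epsilon^2}(X^* )\setminus K_{3\epsilon^2}(C)|<\epsilon^2|C|$. Then, for every outcome in which $X^*$ is representative, $|C\setminus T_\epsilon(X^* )|\le\frac{11}{2}\epsilon|C|$.
   Context: $\Gamma(v)$ denotes the set of neighbors of $v$. For $Y\subseteq V$ and $0\le\eta\le1$: $K_\eta(Y)=\{v\in V: |\Gamma(v)\cap Y|\ge(1-\eta)|Y|\}$, and $T_\epsilon(X)=K_\epsilon(K_{2\epsilon^2}(X))\cap K_{2\epsilon^2}(X)$. Each undirected edge is counted as two directed edges; a set $D\subseteq V$ is a $\gamma$-near clique if $|\{(u,v)\in D\times D:\{u,v\}\in E\}|\ge(1-\gamma)|D|(|D|-1)$. *)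

theory Defs
  imports Complex_Main
begin

definition simple_graph :: "'a set \<Rightarrow> 'a set set \<Rightarrow> bool" where
  "simple_graph V E \<longleftrightarrow> finite V \<and> (\<forall>e\<in>E. e \<subseteq> V \<and> card e = 2)"

definition nbrs :: "'a set set \<Rightarrow> 'a \<Rightarrow> 'a set" where
  "nbrs E v = {u. {u, v} \<in> E}"

definition K :: "'a set \<Rightarrow> 'a set set \<Rightarrow> real \<Rightarrow> 'a set \<Rightarrow> 'a set" where
  "K V E \<eta> Y = {v \<in> V. real (card (nbrs E v \<inter> Y)) \<ge> (1 - \<eta>) * real (card Y)}"

definition T :: "'a set \<Rightarrow> 'a set set \<Rightarrow> real \<Rightarrow> 'a set \<Rightarrow> 'a set" where
  "T V E \<epsilon> X = K V E \<epsilon> (K V E (2 * \<epsilon>^2) X) \<inter> K V E (2 * \<epsilon>^2) X"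

text \<open>Each undirected edge is counted as two ordered pairs.\<close>
definition near_clique :: "'a set \<Rightarrow> 'a set set \<Rightarrow> real \<Rightarrow> 'a set \<Rightarrow> bool" where
  "near_clique V E \<gamma> D \<longleftrightarrow> D \<subseteq> V \<and>
     real (card {(u, v) \<in> D \<times> D. {u, v} \<in> E}) \<ge> (1 - \<gamma>) * real (card D) * (real (card D) - 1)"

end

theory Submission
  imports Defs
begin

lemma nbrs_sym: "(u \<in> nbrs E v) = (v \<in> nbrs E u)"
  by (simp add: nbrs_def insert_commute)

lemma card_filter_sum: "finite A \<Longrightarrow> real (card {x\<in>A. P x}) = (\<Sum>x\<in>A. if P x then 1 else 0)"
  by (simp add: sum.inter_filter[symmetric])

theorem claim5p7:
  fixes V :: "'a set" and E :: "'a set set" and \<epsilon> \<delta> p :: real and D S :: "'a set"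
  assumes "simple_graph V E"
    and "0 < \<epsilon>" and "\<epsilon> < 1/3" and "\<delta> > 0" and "0 < p" and "p < 1"
    and "near_clique V E (\<epsilon>^3) D"
    and "real (card D) \<ge> \<delta> * real (card V)"
    and "S \<subseteq> V"
    and rep1: "real (card (K V E (\<epsilon>^2) D - K V E (2 * \<epsilon>^2) (S \<inter> (K V E (\<epsilon>^2) D \<inter> D))))
               < \<epsilon> * real (card (K V E (\<epsilon>^2) D \<inter> D))"
    and rep2: "real (card (K V E (2 * \<epsilon>^2) (S \<inter> (K V E (\<epsilon>^2) D \<inter> D))
                           - K V E (3 * \<epsilon>^2) (K V E (\<epsilon>^2) D \<inter> D)))
               < \<epsilon>^2 * real (card (K V E (\<epsilon>^2) D \<inter> D))"
  shows "real (card ((K V E (\<epsilon>^2) D \<inter> D) - T V E \<epsilon> (S \<inter> (K V E (\<epsilon>^2) D \<inter> D))))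
         \<le> 11/2 * \<epsilon> * real (card (K V E (\<epsilon>^2) D \<inter> D))"
proof -
  define C where "C = K V E (\<epsilon>^2) D \<inter> D"
  define Y where "Y = K V E (2 * \<epsilon>^2) (S \<inter> C)"
  define K3 where "K3 = K V E (3 * \<epsilon>^2) C"
  define B where "B = C - K V E \<epsilon> Y"
  have fV: "finite V" using assms(1) by (simp add: simple_graph_def)
  have DV: "D \<subseteq> V" using assms(7) by (simp add: near_clique_def)
  have CV: "C \<subseteq> V" using DV C_def by auto
  have YV: "Y \<subseteq> V" by (auto simp: Y_def K_def)
  have fC: "finite C" using CV fV finite_subset by blast
  have fY: "finite Y" using YV fV finite_subset by blast
  have fB: "finite B" using fC B_def by simp
  have r1: "real (card (C - Y)) < \<epsilon> * card C"
  proof -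
    have "card (C - Y) \<le> card (K V E (\<epsilon>^2) D - Y)"
      by (rule card_mono) (auto simp: C_def Y_def K_def fV)
    then show ?thesis using rep1 unfolding C_def Y_def by linarith
  qed
  have r2: "real (card (Y - K3)) < \<epsilon>^2 * card C" using rep2 unfolding C_def Y_def K3_def .
  have sub: "C - T V E \<epsilon> (S \<inter> C) \<subseteq> (C - Y) \<union> B"
    by (auto simp: T_def Y_def B_def)
  have cs: "real (card (C - T V E \<epsilon> (S \<inter> C))) \<le> card (C - Y) + card B"
  proof -
    have "card (C - T V E \<epsilon> (S \<inter> C)) \<le> card ((C - Y) \<union> B)"
      by (rule card_mono) (use fC fB sub in auto)
    also have "\<dots> \<le> card (C - Y) + card B" by (rule card_Un_le)
    finally show ?thesis by linarith
  qed
  show ?thesis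
  proof (cases "C = {}")
    case True
    then show ?thesis unfolding C_def[symmetric] using cs r1 by simp
  next
    case False
    have cC: "card C > 0" using False fC by (simp add: card_gt_0_iff)
    have "card C \<le> card (C \<inter> Y) + card (C - Y)"
      by (metis card_Int_Diff fC le_refl)
    moreover have "card (C \<inter> Y) \<le> card Y" by (rule card_mono[OF fY]) auto
    ultimately have "real (card C) \<le> card Y + card (C - Y)" by linarith
    hence Ybig: "real (card Y) > (1 - \<epsilon>) * card C" using r1 by (simp add: algebra_simps)
    have "(1 - \<epsilon>) * card C > 0" using cC assms(3) by (intro mult_pos_pos) auto
    hence Ypos: "real (card Y) > 0" using Ybig by linarith
    have "2/3 * real (card C) \<le> (1 - \<epsilon>) * card C" using assms(3) by (intro mult_right_mono) auto
    hence CY: "real (card C) \<le> 3/2 * card Y" using Ybig by linarith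
    have swap: "(\<Sum>v\<in>C. real (card {y\<in>Y. y \<notin> nbrs E v})) = (\<Sum>y\<in>Y. real (card {v\<in>C. v \<notin> nbrs E y}))"
    proof -
      have "(\<Sum>v\<in>C. real (card {y\<in>Y. y \<notin> nbrs E v})) = (\<Sum>v\<in>C. \<Sum>y\<in>Y. if y \<notin> nbrs E v then 1 else 0)"
        using fY by (simp add: card_filter_sum)
      also have "\<dots> = (\<Sum>y\<in>Y. \<Sum>v\<in>C. if y \<notin> nbrs E v then 1 else 0)" by (rule sum.swap)
      also have "\<dots> = (\<Sum>y\<in>Y. \<Sum>v\<in>C. if v \<notin> nbrs E y then 1 else 0)" by (simp add: nbrs_sym)
      also have "\<dots> = (\<Sum>y\<in>Y. real (card {v\<in>C. v \<notin> nbrs E y}))"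
        using fC by (simp add: card_filter_sum)
      finally show ?thesis .
    qed
    have lower: "real (card B) * (\<epsilon> * card Y) \<le> (\<Sum>v\<in>C. real (card {y\<in>Y. y \<notin> nbrs E v}))"
    proof -
      have "real (card B) * (\<epsilon> * card Y) = (\<Sum>v\<in>B. \<epsilon> * card Y)" by simp
      also have "\<dots> \<le> (\<Sum>v\<in>B. real (card {y\<in>Y. y \<notin> nbrs E v}))"
      proof (rule sum_mono)
        fix v assume v: "v \<in> B"
        hence "v \<in> V" using CV B_def by auto
        hence lt: "real (card (nbrs E v \<inter> Y)) < (1 - \<epsilon>) * card Y" using v by (auto simp: B_def K_def)
        have "card Y = card (nbrs E v \<inter> Y) + card {y\<in>Y. y \<notin> nbrs E v}"
        proof -
          have "Y = (nbrs E v \<inter> Y) \<union> {y\<in>Y. y \<notin> nbrs E v}" by auto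
          moreover have "card ((nbrs E v \<inter> Y) \<union> {y\<in>Y. y \<notin> nbrs E v}) = card (nbrs E v \<inter> Y) + card {y\<in>Y. y \<notin> nbrs E v}"
            by (rule card_Un_disjoint) (use fY in auto)
          ultimately show ?thesis by metis
        qed
        then show "\<epsilon> * card Y \<le> real (card {y\<in>Y. y \<notin> nbrs E v})" using lt
          by (simp add: algebra_simps)
      qed
      also have "\<dots> \<le> (\<Sum>v\<in>C. real (card {y\<in>Y. y \<notin> nbrs E v}))"
        by (rule sum_mono2) (use fC B_def in auto)
      finally show ?thesis .
    qed
    have upper: "(\<Sum>y\<in>Y. real (card {v\<in>C. v \<notin> nbrs E y})) \<le> card Y * (3 * \<epsilon>^2 * card C) + \<epsilon>^2 * card C * card C"
    proof -
      have "(\<Sum>y\<in>Y. real (card {v\<in>C. v \<notin> nbrs E y})) \<le> (\<Sum>y\<in>Y. 3 * \<epsilon>^2 * card C + (if y \<in> K3 then 0 else real (card C)))"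
      proof (rule sum_mono)
        fix y assume y: "y \<in> Y"
        have eq: "card C = card (nbrs E y \<inter> C) + card {v\<in>C. v \<notin> nbrs E y}"
        proof -
          have "C = (nbrs E y \<inter> C) \<union> {v\<in>C. v \<notin> nbrs E y}" by auto
          moreover have "card ((nbrs E y \<inter> C) \<union> {v\<in>C. v \<notin> nbrs E y}) = card (nbrs E y \<inter> C) + card {v\<in>C. v \<notin> nbrs E y}"
            by (rule card_Un_disjoint) (use fC in auto)
          ultimately show ?thesis by metis
        qed
        show "real (card {v\<in>C. v \<notin> nbrs E y}) \<le> 3 * \<epsilon>^2 * card C + (if y \<in> K3 then 0 else real (card C))"
        proof (cases "y \<in> K3")
          case True
          hence "real (card (nbrs E y \<inter> C)) \<ge> (1 - 3 * \<epsilon>^2) * card C" by (simp add: K3_def K_def)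
          then show ?thesis using True eq by (simp add: algebra_simps)
        next
          case False
          have a: "real (card {v\<in>C. v \<notin> nbrs E y}) \<le> card C" using eq by linarith
          have b: "0 \<le> 3 * \<epsilon>^2 * card C" by simp
          have "real (card {v\<in>C. v \<notin> nbrs E y}) \<le> 3 * \<epsilon>^2 * card C + card C" using a b by linarith
          then show ?thesis using False by simp
        qed
      qed
      also have "\<dots> = card Y * (3 * \<epsilon>^2 * card C) + (\<Sum>y\<in>Y. if y \<in> K3 then 0 else real (card C))"
        by (simp add: sum.distrib del: of_nat_sum)
      also have "(\<Sum>y\<in>Y. if y \<in> K3 then 0 else real (card C)) = real (card (Y - K3)) * card C"
      proof -
        have "(\<Sum>y\<in>Y. if y \<in> K3 then 0 else real (card C)) = (\<Sum>y\<in>Y. if y \<notin> K3 then real (card C) else 0)"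
          by (rule sum.cong) auto
        also have "\<dots> = (\<Sum>y\<in>{y\<in>Y. y \<notin> K3}. real (card C))" using fY by (simp only: sum.inter_filter)
        also have "{y\<in>Y. y \<notin> K3} = Y - K3" by auto
        finally show ?thesis by simp
      qed
      also have "real (card (Y - K3)) * card C \<le> \<epsilon>^2 * card C * card C"
        using r2 by (intro mult_right_mono) auto
      finally show ?thesis by linarith
    qed
    have main: "real (card B) * (\<epsilon> * card Y) \<le> card Y * (3 * \<epsilon>^2 * card C) + \<epsilon>^2 * card C * card C"
      using lower upper swap by linarith
    have "\<epsilon>^2 * card C * card C \<le> \<epsilon>^2 * card C * (3/2 * card Y)"
      using CY by (intro mult_left_mono) auto
    hence "real (card B) * (\<epsilon> * card Y) \<le> (\<epsilon> * card Y) * (9/2 * \<epsilon> * card C)"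
      using main by (simp add: power2_eq_square algebra_simps)
    hence bB: "real (card B) \<le> 9/2 * \<epsilon> * card C"
      using Ypos assms(2) by (simp add: mult.commute mult_le_cancel_left_pos)
    show ?thesis unfolding C_def[symmetric] using cs r1 bB by linarith
  qed
qed

end
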